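(* Let $\sigma:\mathbf R\to\mathbf R$ be a non-decreasing $L$-Lipschitz function, let $A\in\mathbf R^{n\times k}$, $b\in\mathbf R^n$, let $h>0$ and let $\alpha\in(0,1)$. Define $\Xi:\mathbf R^k\to\mathbf R^k$ by $\Xi(x)=x-hA^\top\sigma(Ax+b)$, where $\sigma$ is applied componentwise. If \[h\,\|A\|^2\le 2\alpha/L,\] then $\Xi$ is $\alpha$-averaged.
   Context: $\mathbf R^k$ carries the Euclidean norm $\|\cdot\|$; $\|A\|$ denotes the spectral (operator) norm of $A$. An operator $T$ is non-expansive if $\|T(x)-T(y)\|\le\|x-y\|$ for all $x,y$. For $\alpha\in(0,1)$, an operator $\Xi:\mathbf R^k\to\mathbf R^k$ is called $\alpha$-averaged if there exists a non-expansive $T:\mathbf R^k\to\mathbf R^k$ with $\Xi=(1-\alpha)\mathrm{id}+\alpha T$. *)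

theory Defs
  imports "HOL-Analysis.Analysis"
begin

definition nonexpansive :: "('a::real_normed_vector \<Rightarrow> 'a) \<Rightarrow> bool" where
  "nonexpansive T \<longleftrightarrow> (\<forall>x y. norm (T x - T y) \<le> norm (x - y))"

definition averaged :: "real \<Rightarrow> ('a::real_normed_vector \<Rightarrow> 'a) \<Rightarrow> bool" where
  "averaged \<alpha> \<Xi> \<longleftrightarrow> (\<exists>T. nonexpansive T \<and> \<Xi> = (\<lambda>x. (1 - \<alpha>) *\<^sub>R x + \<alpha> *\<^sub>R T x))"

definition spectral_norm :: "real^'k^'n \<Rightarrow> real" where
  "spectral_norm A = onorm (\<lambda>x. A *v x)"

end

theory Submission
  imports Defs
begin

lemma cocoercive1:
  fixes \<sigma> :: "real \<Rightarrow> real"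
  assumes mono: "mono \<sigma>" and L: "L > 0"
    and lip: "\<And>s t. \<bar>\<sigma> s - \<sigma> t\<bar> \<le> L * \<bar>s - t\<bar>"
  shows "(\<sigma> p - \<sigma> q)^2 \<le> L * ((\<sigma> p - \<sigma> q) * (p - q))"
proof (cases "q \<le> p")
  case True
  have a: "\<sigma> q \<le> \<sigma> p" using mono True by (simp add: mono_def)
  have "\<sigma> p - \<sigma> q \<le> L * (p - q)" using lip[of p q] True a by simp
  then have "(\<sigma> p - \<sigma> q) * (\<sigma> p - \<sigma> q) \<le> (\<sigma> p - \<sigma> q) * (L * (p - q))"
    using a by (intro mult_left_mono) auto
  then show ?thesis by (simp add: power2_eq_square algebra_simps)
next
  case False
  have a: "\<sigma> p \<le> \<sigma> q" using mono False by (simp add: mono_def)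
  have "\<sigma> q - \<sigma> p \<le> L * (q - p)" using lip[of p q] False a by simp
  then have "(\<sigma> q - \<sigma> p) * (\<sigma> q - \<sigma> p) \<le> (\<sigma> q - \<sigma> p) * (L * (q - p))"
    using a by (intro mult_left_mono) auto
  then show ?thesis by (simp add: power2_eq_square algebra_simps)
qed

lemma transpose_bound:
  fixes A :: "real^'k^'n"
  shows "norm (transpose A *v w) \<le> spectral_norm A * norm w"
proof -
  let ?v = "transpose A *v w"
  have "norm ?v ^ 2 = ?v \<bullet> ?v" by (simp add: power2_norm_eq_inner)
  also have "\<dots> = (w v* A) \<bullet> ?v" by simp
  also have "\<dots> = w \<bullet> (A *v ?v)" by (rule dot_lmul_matrix)
  also have "\<dots> \<le> norm w * norm (A *v ?v)" by (rule Cauchy_Schwarz_ineq2[THEN order_trans[OF abs_ge_self]])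
  also have "\<dots> \<le> norm w * (spectral_norm A * norm ?v)"
    unfolding spectral_norm_def
    by (intro mult_left_mono onorm) auto
  finally have *: "norm ?v * norm ?v \<le> (spectral_norm A * norm w) * norm ?v"
    by (simp add: power2_eq_square algebra_simps)
  show ?thesis
  proof (cases "norm ?v = 0")
    case True
    have "0 \<le> spectral_norm A" unfolding spectral_norm_def by (intro onorm_pos_le) auto
    then show ?thesis using True by simp
  next
    case False
    then show ?thesis using * by (simp add: mult_le_cancel_right)
  qed
qed

lemma nd: fixes d v :: "'a::real_inner"
  shows "norm (d - c *\<^sub>R v) ^ 2 = norm d ^ 2 - 2 * c * (d \<bullet> v) + c^2 * norm v ^ 2"
proof -
  have "norm (d - c *\<^sub>R v) ^ 2 = (d - c *\<^sub>R v) \<bullet> (d - c *\<^sub>R v)" by (rule power2_norm_eq_inner)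
  also have "\<dots> = d \<bullet> d - 2 * c * (d \<bullet> v) + c^2 * (v \<bullet> v)"
    by (simp add: inner_diff_left inner_diff_right inner_commute[of v d] power2_eq_square right_diff_distrib)
  finally show ?thesis by (simp add: power2_norm_eq_inner)
qed

theorem mainTheorem3:
  fixes \<sigma> :: "real \<Rightarrow> real" and L h \<alpha> :: real
    and A :: "real^'k^'n" and b :: "real^'n"
  assumes mono: "mono \<sigma>"
    and L_pos: "L > 0"
    and lip: "\<And>s t. \<bar>\<sigma> s - \<sigma> t\<bar> \<le> L * \<bar>s - t\<bar>"
    and h_pos: "h > 0"
    and alpha: "0 < \<alpha>" "\<alpha> < 1"
    and step: "h * (spectral_norm A)\<^sup>2 \<le> 2 * \<alpha> / L"
  shows "averaged \<alpha> (\<lambda>x. x - h *\<^sub>R (transpose A *v (\<chi> i. \<sigma> ((A *v x + b) $ i))))"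
proof -
  define S where "S x = (\<chi> i. \<sigma> ((A *v x + b) $ i))" for x
  define c where "c = h / \<alpha>"
  define T where "T x = x - c *\<^sub>R (transpose A *v S x)" for x
  have c_pos: "c > 0" using h_pos alpha by (simp add: c_def)
  have "nonexpansive T"
    unfolding nonexpansive_def
  proof (intro allI)
    fix x y :: "real^'k"
    define d where "d = x - y"
    define w where "w = S x - S y"
    define v where "v = transpose A *v w"
    have Td: "T x - T y = d - c *\<^sub>R v"
      by (simp add: T_def d_def v_def w_def matrix_vector_mult_diff_distrib algebra_simps)
    have dv: "d \<bullet> v = w \<bullet> (A *v d)"
      by (simp add: v_def dot_lmul_matrix[symmetric] inner_commute)
    have Ad: "(A *v d) $ i = (A *v x + b) $ i - (A *v y + b) $ i" for i
      by (simp add: d_def matrix_vector_mult_diff_distrib)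
    have "norm w ^ 2 = (\<Sum>i\<in>UNIV. (w $ i)^2)"
      unfolding power2_norm_eq_inner inner_vec_def by (simp add: power2_eq_square)
    also have "\<dots> \<le> (\<Sum>i\<in>UNIV. L * (w $ i * (A *v d) $ i))"
      unfolding Ad w_def S_def
      by (intro sum_mono) (simp only: vec_lambda_beta vector_minus_component cocoercive1[OF mono L_pos lip])
    also have "\<dots> = L * (w \<bullet> (A *v d))"
      by (simp add: inner_vec_def sum_distrib_left)
    also have "\<dots> = L * (d \<bullet> v)" by (simp add: dv)
    finally have co: "norm w ^ 2 \<le> L * (d \<bullet> v)" .
    have nv: "norm v ^ 2 \<le> (spectral_norm A)^2 * norm w ^ 2"
    proof -
      have "norm v \<le> spectral_norm A * norm w" unfolding v_def by (rule transpose_bound)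
      then have "norm v ^ 2 \<le> (spectral_norm A * norm w)^2"
        by (intro power_mono) auto
      then show ?thesis by (simp add: power_mult_distrib)
    qed
    have "c^2 * norm v ^ 2 \<le> c^2 * ((spectral_norm A)^2 * norm w ^ 2)"
      using nv by (intro mult_left_mono) auto
    also have "\<dots> = c * (h * (spectral_norm A)^2) * norm w ^ 2 / \<alpha>"
      by (simp add: c_def power2_eq_square)
    also have "\<dots> \<le> c * (2 * \<alpha> / L) * norm w ^ 2 / \<alpha>"
    proof -
      have s1: "c * (h * (spectral_norm A)^2) * norm w ^ 2 \<le> c * (2 * \<alpha> / L) * norm w ^ 2"
        by (rule mult_right_mono[OF mult_left_mono[OF step]]) (use c_pos in auto)
      show ?thesis by (rule divide_right_mono[OF s1]) (use alpha in simp)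
    qed
    also have "\<dots> = 2 * c * (norm w ^ 2 / L)"
      using alpha by (simp add: field_simps)
    also have "\<dots> \<le> 2 * c * (d \<bullet> v)"
    proof -
      have "norm w ^ 2 / L \<le> d \<bullet> v" using co L_pos by (simp add: divide_le_eq mult.commute)
      then show ?thesis by (rule mult_left_mono) (use c_pos in simp)
    qed
    finally have key: "c^2 * norm v ^ 2 \<le> 2 * c * (d \<bullet> v)" .
    have "norm (T x - T y) ^ 2 = norm d ^ 2 - 2 * c * (d \<bullet> v) + c^2 * norm v ^ 2"
      unfolding Td by (rule nd)
    also have "\<dots> \<le> norm d ^ 2" using key by simp
    finally have "norm (T x - T y) ^ 2 \<le> norm d ^ 2" .
    then have "norm (T x - T y) \<le> norm d" by (rule power2_le_imp_le) simp
    then show "norm (T x - T y) \<le> norm (x - y)" by (simp only: d_def)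
  qed
  moreover have "(\<lambda>x. x - h *\<^sub>R (transpose A *v (\<chi> i. \<sigma> ((A *v x + b) $ i))))
      = (\<lambda>x. (1 - \<alpha>) *\<^sub>R x + \<alpha> *\<^sub>R T x)"
  proof
    fix x
    define V where "V = transpose A *v S x"
    have hc: "\<alpha> * c = h" using alpha by (simp add: c_def)
    have e: "\<alpha> *\<^sub>R T x = \<alpha> *\<^sub>R x - h *\<^sub>R V"
      using hc by (simp add: T_def V_def scaleR_diff_right)
    have f: "(1 - \<alpha>) *\<^sub>R x = x - \<alpha> *\<^sub>R x" by (simp add: scaleR_diff_left)
    show "x - h *\<^sub>R (transpose A *v (\<chi> i. \<sigma> ((A *v x + b) $ i))) = (1 - \<alpha>) *\<^sub>R x + \<alpha> *\<^sub>R T x"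
      unfolding e f by (simp add: V_def S_def)
  qed
  ultimately show ?thesis unfolding averaged_def by blast
qed

end
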